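(* Let $A$ be a normalized real $n\times n$ matrix. For any two stationary points $x_1^\star,x_2^\star\in\Delta_n$ of $f_A$, $$|f_A(x_1^\star)-f_A(x_2^\star)|\le (x_1^\star-x_2^\star)^\tau A(x_1^\star-x_2^\star).$$
   Context: $\Delta_n=\{u\in\mathbb{R}^n:u\ge0,\ e^\tau u=1\}$ ($e$ the all-ones vector). A square matrix is normalized if its maximum entry is $1$ and its minimum entry is $0$. For $u\in\mathbb{R}^n$, $\max(u)$ is its largest entry. $f_A(x)=\max(Ax)-x^\tau Ax$ for $x\in\Delta_n$. For $x,x'\in\Delta_n$, $D_A(x',x)=\lim_{\epsilon\to0^+}\frac1\epsilon\big(f_A((1-\epsilon)x+\epsilon x')-f_A(x)\big)$ (this limit exists). A point $x^\star\in\Delta_n$ is a stationary point of $f_A$ if $D_A(x,x^\star)\ge0$ for all $x\in\Delta_n$. *)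

theory Defs
  imports "HOL-Analysis.Analysis"
begin

definition std_simplex :: "(real^'n) set" where
  "std_simplex = {u. (\<forall>i. 0 \<le> u $ i) \<and> (\<Sum>i\<in>UNIV. u $ i) = 1}"

definition vmax :: "real^'n \<Rightarrow> real" where
  "vmax u = Max (range (\<lambda>i. u $ i))"

definition normalized :: "real^'n^'n \<Rightarrow> bool" where
  "normalized A \<longleftrightarrow> Max {A $ i $ j | i j. True} = 1 \<and> Min {A $ i $ j | i j. True} = 0"

definition fA :: "real^'n^'n \<Rightarrow> real^'n \<Rightarrow> real" where
  "fA A x = vmax (A *v x) - x \<bullet> (A *v x)"

definition DA :: "real^'n^'n \<Rightarrow> real^'n \<Rightarrow> real^'n \<Rightarrow> real" where
  "DA A x' x = Lim (at_right 0)
     (\<lambda>\<epsilon>. (fA A ((1 - \<epsilon>) *\<^sub>R x + \<epsilon> *\<^sub>R x') - fA A x) / \<epsilon>)"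

definition stationary :: "real^'n^'n \<Rightarrow> real^'n \<Rightarrow> bool" where
  "stationary A xs \<longleftrightarrow> xs \<in> std_simplex \<and> (\<forall>x\<in>std_simplex. DA A x xs \<ge> 0)"

end

theory Submission
  imports Defs
begin

lemma vmax_ge: "u $ i \<le> vmax u"
  unfolding vmax_def by (rule Max_ge) auto

lemma vmax_obtain: "\<exists>i. vmax u = u $ i"
proof -
  have "vmax u \<in> range (\<lambda>i. u $ i)" unfolding vmax_def by (rule Max_in) auto
  then show ?thesis by auto
qed

lemma vmax_comb:
  assumes "a \<ge> 0" "b \<ge> 0"
  shows "vmax (a *\<^sub>R u + b *\<^sub>R v) \<le> a * vmax u + b * vmax v"
proof -
  obtain i where i: "vmax (a *\<^sub>R u + b *\<^sub>R v) = (a *\<^sub>R u + b *\<^sub>R v) $ i"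
    using vmax_obtain by blast
  have "a * u $ i \<le> a * vmax u" using assms vmax_ge by (intro mult_left_mono) auto
  moreover have "b * v $ i \<le> b * vmax v" using assms vmax_ge by (intro mult_left_mono) auto
  ultimately show ?thesis using i by simp
qed

lemma DA_le:
  fixes A :: "real^'n^'n" and x x' :: "real^'n"
  shows "DA A x' x \<le> vmax (A *v x') - vmax (A *v x)
            - x \<bullet> (A *v (x' - x)) - (x' - x) \<bullet> (A *v x)"
proof -
  define y where "y = x' - x"
  define m where "m = vmax (A *v x)"
  define \<phi> where "\<phi> e = vmax (A *v x + e *\<^sub>R (A *v y))" for e
  define h where "h e = (\<phi> e - m) / e" for e
  define Q where "Q e = - (x \<bullet> (A *v y) + y \<bullet> (A *v x) + e * (y \<bullet> (A *v y)))" for e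
  define g where "g e = (fA A ((1 - e) *\<^sub>R x + e *\<^sub>R x') - fA A x) / e" for e
  have pt: "(1 - e) *\<^sub>R x + e *\<^sub>R x' = x + e *\<^sub>R y" for e
    by (simp add: y_def algebra_simps)
  have phi0: "\<phi> 0 = m" by (simp add: \<phi>_def m_def)
  have geq: "g e = h e + Q e" if "e \<noteq> 0" for e
  proof -
    have "fA A ((1 - e) *\<^sub>R x + e *\<^sub>R x') = \<phi> e - (x + e *\<^sub>R y) \<bullet> (A *v (x + e *\<^sub>R y))"
      unfolding pt fA_def \<phi>_def by (simp add: algebra_simps)
    also have "(x + e *\<^sub>R y) \<bullet> (A *v (x + e *\<^sub>R y)) = x \<bullet> (A *v x)
        + e * (x \<bullet> (A *v y) + y \<bullet> (A *v x)) + e * e * (y \<bullet> (A *v y))"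
      by (simp add: algebra_simps inner_add_left inner_add_right)
    finally show ?thesis using that
      unfolding g_def h_def Q_def fA_def m_def by (simp add: field_simps)
  qed
  have mono: "h a \<le> h b" if "0 < a" "a \<le> b" for a b
  proof -
    have "A *v x + a *\<^sub>R (A *v y) = (1 - a/b) *\<^sub>R (A *v x) + (a/b) *\<^sub>R (A *v x + b *\<^sub>R (A *v y))"
      using that by (simp add: algebra_simps)
    hence "\<phi> a \<le> (1 - a/b) * m + (a/b) * \<phi> b"
      unfolding \<phi>_def m_def using that by (metis vmax_comb divide_nonneg_nonneg diff_ge_0_iff_ge
          divide_le_eq_1 less_le_trans less_imp_le)
    hence "\<phi> a - m \<le> (a/b) * (\<phi> b - m)" by (simp add: algebra_simps)
    hence "(\<phi> a - m)/a \<le> (\<phi> b - m)/b" using that by (simp add: field_simps)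
    thus ?thesis by (simp add: h_def)
  qed
  obtain i0 where i0: "m = (A *v x) $ i0" using vmax_obtain m_def by blast
  have bnd: "(A *v y) $ i0 \<le> h a" if "0 < a" for a
  proof -
    have "m + a * (A *v y) $ i0 \<le> \<phi> a" unfolding \<phi>_def i0
      using vmax_ge[of "A *v x + a *\<^sub>R (A *v y)" i0] by simp
    thus ?thesis using that by (simp add: h_def field_simps)
  qed
  define L where "L = Inf (h ` ({0<..} \<inter> UNIV))"
  have hlim: "(h \<longlongrightarrow> L) (at_right 0)"
    unfolding L_def using Lim_right_bound[of UNIV 0 h "(A *v y) $ i0"] mono bnd by simp
  have Lle: "L \<le> h 1"
    unfolding L_def by (rule cInf_lower) (auto intro!: bdd_belowI[where m="(A *v y) $ i0"] bnd)
  have Qlim: "(Q \<longlongrightarrow> Q 0) (at_right 0)"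
    unfolding Q_def by (intro tendsto_intros)
  have "((\<lambda>e. h e + Q e) \<longlongrightarrow> L + Q 0) (at_right 0)"
    using hlim Qlim by (rule tendsto_add)
  moreover have "\<forall>\<^sub>F e in at_right 0. h e + Q e = g e"
    unfolding eventually_at_filter by (auto simp: geq)
  ultimately have "(g \<longlongrightarrow> L + Q 0) (at_right 0)"
    by (rule Lim_transform_eventually)
  hence "DA A x' x = L + Q 0"
    unfolding DA_def g_def[symmetric] by (intro tendsto_Lim) auto
  also have "\<dots> \<le> h 1 + Q 0" using Lle by simp
  also have "h 1 = vmax (A *v x') - vmax (A *v x)"
    unfolding h_def \<phi>_def m_def y_def by (simp add: algebra_simps)
  finally show ?thesis by (simp add: Q_def y_def)
qed

theorem theorem7:
  fixes A :: "real^'n^'n" and x1 x2 :: "real^'n"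
  assumes "normalized A"
    and "stationary A x1" and "stationary A x2"
  shows "\<bar>fA A x1 - fA A x2\<bar> \<le> (x1 - x2) \<bullet> (A *v (x1 - x2))"
proof -
  have s1: "0 \<le> DA A x2 x1" and s2: "0 \<le> DA A x1 x2"
    using assms(2,3) unfolding stationary_def by auto
  note d1 = order_trans[OF s1 DA_le] and d2 = order_trans[OF s2 DA_le]
  have e: "(x1 - x2) \<bullet> (A *v (x1 - x2)) = x1 \<bullet> (A *v x1) - x1 \<bullet> (A *v x2) - x2 \<bullet> (A *v x1) + x2 \<bullet> (A *v x2)"
    by (simp add: algebra_simps inner_diff_left inner_diff_right)
  have e1: "x1 \<bullet> (A *v (x2 - x1)) = x1 \<bullet> (A *v x2) - x1 \<bullet> (A *v x1)"
    by (simp add: algebra_simps inner_diff_right)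
  have e2: "x2 \<bullet> (A *v (x1 - x2)) = x2 \<bullet> (A *v x1) - x2 \<bullet> (A *v x2)"
    by (simp add: algebra_simps inner_diff_right)
  have e3: "(x2 - x1) \<bullet> (A *v x1) = x2 \<bullet> (A *v x1) - x1 \<bullet> (A *v x1)"
    by (simp add: inner_diff_left)
  have e4: "(x1 - x2) \<bullet> (A *v x2) = x1 \<bullet> (A *v x2) - x2 \<bullet> (A *v x2)"
    by (simp add: inner_diff_left)
  show ?thesis using d1 d2 unfolding e e1 e2 e3 e4 fA_def by linarith
qed

end
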